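(* For all $k\geq 1$ there is $N$ such that every irreducible graph $G=(V,E)$ with $|V|\geq N$ contains an element of $Irr(k)$ as an induced subgraph.
   Context: For a graph $G=(V,E)$ define $x\sim_G y$ if for all $z\in V\setminus\{x,y\}$, $xz\in E$ iff $yz\in E$; this is an equivalence relation. $G$ is irreducible if every $\sim_G$-class has size $1$. For $k\ge1$, $Irr(k)$ is the set of all graphs on the vertex set $\{a_1,\dots,a_k,b_1,\dots,b_k\}$ ($2k$ distinct vertices) such that one of the following holds: (i) for all $i,j\in[k]$, $a_ib_j\in E$ iff $i\le j$; (ii) for all $i,j\in[k]$, $a_ib_j\in E$ iff $i=j$; (iii) for all $i,j\in[k]$, $a_ib_j\in E$ iff $i\ne j$. (Edges among the $a_i$'s and among the $b_j$'s are unrestricted.) *)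

theory Defs
  imports Main
begin

definition graph :: "'a set \<Rightarrow> ('a \<Rightarrow> 'a \<Rightarrow> bool) \<Rightarrow> bool" where
  "graph V E \<longleftrightarrow> finite V \<and> (\<forall>x\<in>V. \<forall>y\<in>V. E x y \<longleftrightarrow> E y x) \<and> (\<forall>x\<in>V. \<not> E x x)"

definition twin_rel :: "'a set \<Rightarrow> ('a \<Rightarrow> 'a \<Rightarrow> bool) \<Rightarrow> 'a \<Rightarrow> 'a \<Rightarrow> bool" where
  "twin_rel V E x y \<longleftrightarrow> (\<forall>z \<in> V - {x, y}. E x z \<longleftrightarrow> E y z)"

definition irreducible :: "'a set \<Rightarrow> ('a \<Rightarrow> 'a \<Rightarrow> bool) \<Rightarrow> bool" where
  "irreducible V E \<longleftrightarrow> (\<forall>x\<in>V. card {y\<in>V. twin_rel V E x y} = 1)"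

text \<open>Vertex set of Irr(k): a_i = Inl i, b_j = Inr j, i,j in {1..k}.\<close>

definition irr_vertices :: "nat \<Rightarrow> (nat + nat) set" where
  "irr_vertices k = Inl ` {1..k} \<union> Inr ` {1..k}"

definition in_Irr :: "nat \<Rightarrow> (nat + nat \<Rightarrow> nat + nat \<Rightarrow> bool) \<Rightarrow> bool" where
  "in_Irr k H \<longleftrightarrow> graph (irr_vertices k) H \<and>
     ((\<forall>i\<in>{1..k}. \<forall>j\<in>{1..k}. H (Inl i) (Inr j) \<longleftrightarrow> i \<le> j) \<or>
      (\<forall>i\<in>{1..k}. \<forall>j\<in>{1..k}. H (Inl i) (Inr j) \<longleftrightarrow> i = j) \<or>
      (\<forall>i\<in>{1..k}. \<forall>j\<in>{1..k}. H (Inl i) (Inr j) \<longleftrightarrow> i \<noteq> j))"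

definition induced_subgraph ::
  "'b set \<Rightarrow> ('b \<Rightarrow> 'b \<Rightarrow> bool) \<Rightarrow> 'a set \<Rightarrow> ('a \<Rightarrow> 'a \<Rightarrow> bool) \<Rightarrow> bool" where
  "induced_subgraph W H V E \<longleftrightarrow>
     (\<exists>f. inj_on f W \<and> f ` W \<subseteq> V \<and> (\<forall>u\<in>W. \<forall>v\<in>W. H u v \<longleftrightarrow> E (f u) (f v)))"

end

theory Submission
  imports Defs "HOL-Library.Ramsey"
begin

lemma enum_set:
  fixes H :: "nat set"
  assumes "finite H" "card H = m"
  shows "\<exists>g. (\<forall>i<m. g i \<in> H) \<and> (\<forall>i j. i < j \<longrightarrow> j < m \<longrightarrow> g i < g j)"
proof -
  obtain xs where xs: "sorted_wrt (<) xs" "set xs = H" "length xs = card H"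
    by (metis assms(1) sorted_list_of_set.length_sorted_key_list_of_set
        sorted_list_of_set.set_sorted_key_list_of_set strict_sorted_list_of_set)
  show ?thesis
    apply (rule exI[of _ "\<lambda>i. xs ! i"])
    using xs assms by (auto simp: sorted_wrt_nth_less)
qed

lemma distinguish:
  assumes "irreducible V E" "x \<in> V" "y \<in> V" "x \<noteq> y"
  shows "\<exists>z\<in>V - {x, y}. E x z \<noteq> E y z"
proof (rule ccontr)
  assume "\<not> ?thesis"
  hence t: "twin_rel V E x y" unfolding twin_rel_def by blast
  have "twin_rel V E x x" unfolding twin_rel_def by blast
  hence "{x, y} \<subseteq> {w\<in>V. twin_rel V E x w}" using t assms by auto
  moreover have "finite {w\<in>V. twin_rel V E x w}"
    using assms(1,2) unfolding irreducible_def by (metis card.infinite zero_neq_one)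
  ultimately have "card {x, y} \<le> card {w\<in>V. twin_rel V E x w}" by (rule card_mono[rotated])
  thus False using assms unfolding irreducible_def by auto
qed

lemma chain:
  assumes G: "graph V E" and irr: "irreducible V E"
  shows "U \<subseteq> V \<Longrightarrow> card U \<ge> 4^L \<Longrightarrow> \<exists>z S c.
     (\<forall>i<L. z i \<in> V \<and> S i \<in> U) \<and> inj_on z {..<L} \<and> inj_on S {..<L} \<and>
     (\<forall>i<L. \<forall>j. j \<le> i \<longrightarrow> S i \<noteq> z j) \<and>
     (\<forall>i j. i < j \<longrightarrow> j < L \<longrightarrow> E (S j) (z i) = c i) \<and>
     (\<forall>i<L. E (S i) (z i) = (\<not> c i)) \<and>
     (\<forall>i<L. \<exists>u\<in>U. E u (z i) = c i)"
proof (induction L arbitrary: U)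
  case 0
  then show ?case by (auto intro: inj_onI)
next
  case (Suc L)
  have finU: "finite U" using Suc.prems(2)
    by (metis card.infinite le_zero_eq power_not_zero zero_neq_numeral)
  have "card U \<ge> 2" using Suc.prems(2)
    by (metis dual_order.trans le_add2 numeral_le_iff one_le_power power_Suc semiring_norm(69) mult_le_mono2 mult.commute
         nat_mult_1 numeral_Bit0 numeral_One)
  then have "\<not> card U \<le> Suc 0" by simp
  then obtain x y where xy: "x \<in> U" "y \<in> U" "x \<noteq> y"
    using card_le_Suc0_iff_eq[OF finU] by blast
  then obtain z0 where z0: "z0 \<in> V" "z0 \<noteq> x" "z0 \<noteq> y" "E x z0 \<noteq> E y z0"
    using distinguish[OF irr] Suc.prems(1) by blast
  define UT where "UT = {u\<in>U - {z0}. E u z0}"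
  define UF where "UF = {u\<in>U - {z0}. \<not> E u z0}"
  have "U - {z0} = UT \<union> UF" "UT \<inter> UF = {}" unfolding UT_def UF_def by auto
  hence "card (U - {z0}) = card UT + card UF"
    using finU by (metis card_Un_disjoint finite_Diff finite_Un)
  moreover have "card (U - {z0}) \<ge> card U - 1" by (simp add: card_Diff_singleton_if finU)
  ultimately have sum: "card UT + card UF + 1 \<ge> 4 * 4^L" using Suc.prems(2) by simp
  define c0 where "c0 = (card UF \<le> card UT)"
  define U' where "U' = {u\<in>U - {z0}. E u z0 = c0}"
  have U'card: "card U' \<ge> 4^L"
  proof (cases c0)
    case True
    then have "U' = UT" unfolding U'_def UT_def by auto
    then show ?thesis using sum True c0_def by simp
  next
    case False
    then have "U' = UF" unfolding U'_def UF_def by auto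
    then show ?thesis using sum False c0_def by simp
  qed
  have U'V: "U' \<subseteq> V" using Suc.prems(1) unfolding U'_def by auto
  obtain z' S' c' where IH:
     "(\<forall>i<L. z' i \<in> V \<and> S' i \<in> U')" "inj_on z' {..<L}" "inj_on S' {..<L}"
     "(\<forall>i<L. \<forall>j. j \<le> i \<longrightarrow> S' i \<noteq> z' j)"
     "(\<forall>i j. i < j \<longrightarrow> j < L \<longrightarrow> E (S' j) (z' i) = c' i)"
     "(\<forall>i<L. E (S' i) (z' i) = (\<not> c' i))"
     "(\<forall>i<L. \<exists>u\<in>U'. E u (z' i) = c' i)"
    using Suc.IH[OF U'V U'card] by blast
  obtain s0 where s0: "s0 \<in> U" "s0 \<noteq> z0" "E s0 z0 = (\<not> c0)"
    using xy z0 by (metis (full_types))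
  obtain u0 where u0: "u0 \<in> U" "E u0 z0 = c0"
    using xy z0 by (metis (full_types))
  have s0U': "s0 \<notin> U'" using s0 unfolding U'_def by auto
  have z0z': "z' i \<noteq> z0" if iL: "i < L" for i
  proof
    assume "z' i = z0"
    obtain u where "u \<in> U'" "E u (z' i) = c' i" using IH(7) iL by blast
    moreover have "S' i \<in> U'" using IH(1) iL by blast
    ultimately show False using IH(6) iL \<open>z' i = z0\<close> unfolding U'_def by auto
  qed
  have z0S': "S' i \<noteq> z0" if "i < L" for i using IH(1) that unfolding U'_def by auto
  have SU: "S' i \<in> U" if "i < L" for i using IH(1) that unfolding U'_def by auto
  have SE: "E (S' i) z0 = c0" if "i < L" for i using IH(1) that unfolding U'_def by auto
  have P1: "\<forall>i<Suc L. case_nat z0 z' i \<in> V \<and> case_nat s0 S' i \<in> U"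
    using IH(1) U'V z0 s0 SU by (auto simp: less_Suc_eq_0_disj)
  have P2: "inj_on (case_nat z0 z') {..<Suc L}"
    using IH(2) z0z' unfolding inj_on_def
    by (auto simp: less_Suc_eq_0_disj split: nat.splits)
  have P3: "inj_on (case_nat s0 S') {..<Suc L}"
    using IH(3) s0U' IH(1) unfolding inj_on_def
    by (auto simp: less_Suc_eq_0_disj split: nat.splits)
  have P4: "\<forall>i<Suc L. \<forall>j. j \<le> i \<longrightarrow> case_nat s0 S' i \<noteq> case_nat z0 z' j"
    using IH(4) s0 z0S' by (auto simp: less_Suc_eq_0_disj split: nat.splits)
  have P5: "\<forall>i j. i < j \<longrightarrow> j < Suc L \<longrightarrow> E (case_nat s0 S' j) (case_nat z0 z' i) = case_nat c0 c' i"
    using IH(5) SE by (auto simp: less_Suc_eq_0_disj split: nat.splits)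
  have P6: "\<forall>i<Suc L. E (case_nat s0 S' i) (case_nat z0 z' i) = (\<not> case_nat c0 c' i)"
    using IH(6) s0 by (auto simp: less_Suc_eq_0_disj split: nat.splits)
  have P7: "\<forall>i<Suc L. \<exists>u\<in>U. E u (case_nat z0 z' i) = case_nat c0 c' i"
    using IH(7) u0 unfolding U'_def by (auto simp: less_Suc_eq_0_disj split: nat.splits)
  show ?case
    apply (rule exI[of _ "case_nat z0 z'"])
    apply (rule exI[of _ "case_nat s0 S'"])
    apply (rule exI[of _ "case_nat c0 c'"])
    using P1 P2 P3 P4 P5 P6 P7 by blast
qed


lemma finish:
  assumes G: "graph V E" and AV: "\<forall>i\<in>{1..k}. A i \<in> V \<and> B i \<in> V"
    and injA: "inj_on A {1..k}" and injB: "inj_on B {1..k}"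
    and AB: "\<forall>i\<in>{1..k}. \<forall>j\<in>{1..k}. A i \<noteq> B j"
    and pat: "(\<forall>i\<in>{1..k}. \<forall>j\<in>{1..k}. E (A i) (B j) \<longleftrightarrow> i \<le> j) \<or>
      (\<forall>i\<in>{1..k}. \<forall>j\<in>{1..k}. E (A i) (B j) \<longleftrightarrow> i = j) \<or>
      (\<forall>i\<in>{1..k}. \<forall>j\<in>{1..k}. E (A i) (B j) \<longleftrightarrow> i \<noteq> j)"
  shows "\<exists>H. in_Irr k H \<and> induced_subgraph (irr_vertices k) H V E"
proof -
  define f where "f = case_sum A B"
  define H where "H = (\<lambda>u v. E (f u) (f v))"
  have fV: "\<forall>u\<in>irr_vertices k. f u \<in> V"
  proof
    fix u assume "u \<in> irr_vertices k"
    then obtain i where "i \<in> {1..k}" "u = Inl i \<or> u = Inr i" unfolding irr_vertices_def by blast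
    thus "f u \<in> V" using AV unfolding f_def by auto
  qed
  have inj: "inj_on f (irr_vertices k)"
  proof (rule inj_onI)
    fix u v assume u: "u \<in> irr_vertices k" and v: "v \<in> irr_vertices k" and e: "f u = f v"
    from u obtain i where i: "i \<in> {1..k}" "u = Inl i \<or> u = Inr i" unfolding irr_vertices_def by blast
    from v obtain j where j: "j \<in> {1..k}" "v = Inl j \<or> v = Inr j" unfolding irr_vertices_def by blast
    show "u = v"
      using i(2) j(2)
    proof (elim disjE)
      assume "u = Inl i" "v = Inl j" thus ?thesis using e i j injA unfolding f_def by (simp add: inj_on_eq_iff)
    next
      assume "u = Inl i" "v = Inr j" thus ?thesis using e i j AB unfolding f_def by simp
    next
      assume "u = Inr i" "v = Inl j" thus ?thesis using e i j AB unfolding f_def by (simp, metis)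
    next
      assume "u = Inr i" "v = Inr j" thus ?thesis using e i j injB unfolding f_def by (simp add: inj_on_eq_iff)
    qed
  qed
  have fin: "finite (irr_vertices k)" unfolding irr_vertices_def by simp
  have symE: "\<forall>x\<in>V. \<forall>y\<in>V. E x y \<longleftrightarrow> E y x" and irrE: "\<forall>x\<in>V. \<not> E x x"
    using G unfolding graph_def by auto
  have gr: "graph (irr_vertices k) H"
    unfolding graph_def
  proof (intro conjI fin ballI)
    fix u v assume "u \<in> irr_vertices k" "v \<in> irr_vertices k"
    thus "H u v = H v u" unfolding H_def using fV symE by blast
  next
    fix u assume "u \<in> irr_vertices k"
    thus "\<not> H u u" unfolding H_def using fV irrE by blast
  qed
  have HAB: "H (Inl i) (Inr j) = E (A i) (B j)" for i j unfolding H_def f_def by simp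
  have "in_Irr k H" unfolding in_Irr_def HAB using gr pat by blast
  moreover have "induced_subgraph (irr_vertices k) H V E"
    unfolding induced_subgraph_def using inj fV unfolding H_def by blast
  ultimately show ?thesis by blast
qed

definition bv :: "bool \<Rightarrow> bool \<Rightarrow> bool \<Rightarrow> nat" where
  "bv P Q R = (if P then 1 else 0) + (if Q then 2 else 0) + (if R then 4 else 0)"

lemma bv_inj: "bv P Q R = bv P' Q' R' \<Longrightarrow> P = P' \<and> Q = Q' \<and> R = R'"
  unfolding bv_def by (auto split: if_splits)

lemma bv_lt: "bv P Q R < 8"
  unfolding bv_def by auto

theorem theorem3p29:
  fixes k :: nat
  assumes "k \<ge> 1"
  shows "\<exists>N::nat. \<forall>(V::'a set) E. graph V E \<and> irreducible V E \<and> card V \<ge> N \<longrightarrow>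
           (\<exists>H. in_Irr k H \<and> induced_subgraph (irr_vertices k) H V E)"
proof -
  obtain N0 :: nat where R: "partn_lst {..<N0} (replicate 8 (k+2)) 2" using ramsey_full by blast
  have "\<forall>(V::'a set) E. graph V E \<and> irreducible V E \<and> card V \<ge> 4^N0 \<longrightarrow>
           (\<exists>H. in_Irr k H \<and> induced_subgraph (irr_vertices k) H V E)"
  proof (intro allI impI)
    fix V :: "'a set" and E
    assume a: "graph V E \<and> irreducible V E \<and> card V \<ge> 4^N0"
    hence G: "graph V E" by blast
    obtain z S c where ch:
     "(\<forall>i<N0. z i \<in> V \<and> S i \<in> V)" "inj_on z {..<N0}" "inj_on S {..<N0}"
     "(\<forall>i<N0. \<forall>j. j \<le> i \<longrightarrow> S i \<noteq> z j)"
     "(\<forall>i j. i < j \<longrightarrow> j < N0 \<longrightarrow> E (S j) (z i) = c i)"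
     "(\<forall>i<N0. E (S i) (z i) = (\<not> c i))"
      using chain[of V E V N0] a by blast
    define col where "col e = bv (E (S (Min e)) (z (Max e))) (z (Max e) = S (Min e)) (c (Min e))" for e
    have "col \<in> nsets {..<N0} 2 \<rightarrow> {..<length (replicate 8 (k+2))}"
      using bv_lt unfolding col_def by auto
    then obtain i Hs where Hs: "i < length (replicate 8 (k+2))" "Hs \<in> nsets {..<N0} (replicate 8 (k+2) ! i)"
       "col ` (nsets Hs 2) \<subseteq> {i}"
      using partn_lstE[OF R] by metis
    have Hs2: "Hs \<subseteq> {..<N0}" "finite Hs" "card Hs = k+2" using Hs(1,2) unfolding nsets_def by auto
    obtain g where g: "\<forall>a<k+2. g a \<in> Hs" "\<forall>a b. a < b \<longrightarrow> b < k+2 \<longrightarrow> g a < g b"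
      using enum_set[OF Hs2(2,3)] by blast
    have gN: "g a < N0" if "a < k+2" for a using g(1) Hs2(1) that by auto
    have ginj: "a = b" if "a < k+2" "b < k+2" "g a = g b" for a b
      using g(2) that by (metis less_irrefl linorder_neq_iff)
    have colab: "col {g a, g b} = i" if "a < b" "b < k+2" for a b
    proof -
      have "g a < g b" using g(2) that by blast
      hence "{g a, g b} \<in> nsets Hs 2" using g(1) that by (auto simp: nsets_def card_insert_if)
      thus ?thesis using Hs(3) by blast
    qed
    have colv: "col {g a, g b} = bv (E (S (g a)) (z (g b))) (z (g b) = S (g a)) (c (g a))"
      if "a < b" "b < k+2" for a b
    proof -
      have "g a < g b" using g(2) that by blast
      hence "Min {g a, g b} = g a" "Max {g a, g b} = g b" by auto
      thus ?thesis unfolding col_def by simp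
    qed
    define d where "d = E (S (g 0)) (z (g 1))"
    define e0 where "e0 = (z (g 1) = S (g 0))"
    define c0 where "c0 = c (g 0)"
    have k2: "1 < k+2" by simp
    have props: "E (S (g a)) (z (g b)) = d \<and> (z (g b) = S (g a)) = e0 \<and> c (g a) = c0"
      if "a < b" "b < k+2" for a b
    proof -
      have "bv (E (S (g a)) (z (g b))) (z (g b) = S (g a)) (c (g a)) = bv d e0 c0"
        using colab[OF that] colv[OF that] colab[of 0 1] colv[of 0 1] k2
        unfolding d_def e0_def c0_def by simp
      thus ?thesis by (rule bv_inj)
    qed
    have ne0: "\<not> e0"
    proof
      assume e0
      have "z (g 2) = S (g 0)" "z (g 2) = S (g 1)" using props[of 0 2] props[of 1 2] \<open>e0\<close> assms by auto
      hence "S (g 0) = S (g 1)" by simp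
      hence "g 0 = g 1" using ch(3) gN[of 0] gN[of 1] by (auto dest: inj_onD)
      thus False using ginj[of 0 1] by simp
    qed
    have dist: "S (g a) \<noteq> z (g b)" if "a < k+2" "b < k+2" for a b
    proof (cases "b \<le> a")
      case True
      hence "g b \<le> g a" using g(2) that by (metis le_eq_less_or_eq less_imp_le)
      thus ?thesis using ch(4) gN that by blast
    next
      case False
      thus ?thesis using props[of a b] ne0 that by auto
    qed
    have cc: "c (g a) = c0" if "a < k+1" for a using props[of a "k+1"] that by auto
    have Eval: "E (S (g a)) (z (g b)) = (if a < b then d else if a = b then \<not> c0 else c0)"
      if "a < k+2" "b < k+1" for a b
    proof -
      consider "a < b" | "a = b" | "b < a" by linarith
      thus ?thesis
      proof cases
        case 1 thus ?thesis using props[of a b] that by auto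
      next
        case 2 thus ?thesis using ch(6) gN cc that by auto
      next
        case 3
        hence "g b < g a" using g(2) that by auto
        thus ?thesis using ch(5) gN cc that 3 by auto
      qed
    qed
    have Sinj: "inj_on (\<lambda>a. S (g a)) {1..k}"
    proof (rule inj_onI)
      fix a b assume ab: "a \<in> {1..k}" "b \<in> {1..k}" "S (g a) = S (g b)"
      hence "g a = g b" using inj_onD[OF ch(3)] gN[of a] gN[of b] by auto
      thus "a = b" using ginj[of a b] ab by auto
    qed
    have zinj: "inj_on (\<lambda>a. z (g a)) {1..k}"
    proof (rule inj_onI)
      fix a b assume ab: "a \<in> {1..k}" "b \<in> {1..k}" "z (g a) = z (g b)"
      hence "g a = g b" using inj_onD[OF ch(2)] gN[of a] gN[of b] by auto
      thus "a = b" using ginj[of a b] ab by auto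
    qed
    have Sinj1: "inj_on (\<lambda>a. S (g (a+1))) {1..k}"
    proof (rule inj_onI)
      fix a b assume ab: "a \<in> {1..k}" "b \<in> {1..k}" "S (g (a+1)) = S (g (b+1))"
      hence "g (a+1) = g (b+1)" using inj_onD[OF ch(3)] gN[of "a+1"] gN[of "b+1"] by auto
      thus "a = b" using ginj[of "a+1" "b+1"] ab by auto
    qed
    have Ev: "\<And>i j. i\<in>{1..k} \<Longrightarrow> j\<in>{1..k} \<Longrightarrow>
       E (S (g i)) (z (g j)) = (if i<j then d else if i=j then \<not> c0 else c0)"
      using Eval by auto
    have inV: "S (g a) \<in> V" "z (g a) \<in> V" if "a < k+2" for a using ch(1) gN that by auto
    have sym: "E x y = E y x" if "x \<in> V" "y \<in> V" for x y using G that unfolding graph_def by blast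
    show "\<exists>H. in_Irr k H \<and> induced_subgraph (irr_vertices k) H V E"
    proof (cases "c0 = d")
      case True
      show ?thesis
      proof (rule finish[OF G _ Sinj zinj])
        show "\<forall>i\<in>{1..k}. S (g i) \<in> V \<and> z (g i) \<in> V" using inV by auto
        show "\<forall>i\<in>{1..k}. \<forall>j\<in>{1..k}. S (g i) \<noteq> z (g j)" using dist by auto
        show "(\<forall>i\<in>{1..k}. \<forall>j\<in>{1..k}. E (S (g i)) (z (g j)) = (i \<le> j)) \<or>
          (\<forall>i\<in>{1..k}. \<forall>j\<in>{1..k}. E (S (g i)) (z (g j)) = (i = j)) \<or>
          (\<forall>i\<in>{1..k}. \<forall>j\<in>{1..k}. E (S (g i)) (z (g j)) = (i \<noteq> j))"
        proof (cases c0)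
          case c0T: True
          have "\<forall>i\<in>{1..k}. \<forall>j\<in>{1..k}. E (S (g i)) (z (g j)) = (i \<noteq> j)"
          proof (intro ballI)
            fix i j assume ij: "i \<in> {1..k}" "j \<in> {1..k}"
            show "E (S (g i)) (z (g j)) = (i \<noteq> j)" using Ev[OF ij] c0T True by simp
          qed
          thus ?thesis by blast
        next
          case c0F: False
          have "\<forall>i\<in>{1..k}. \<forall>j\<in>{1..k}. E (S (g i)) (z (g j)) = (i = j)"
          proof (intro ballI)
            fix i j assume ij: "i \<in> {1..k}" "j \<in> {1..k}"
            show "E (S (g i)) (z (g j)) = (i = j)" using Ev[OF ij] c0F True by simp
          qed
          thus ?thesis by blast
        qed
      qed
    next
      case False
      show ?thesis
      proof (cases c0)
        case True
        with False have nd: "\<not> d" by simp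
        show ?thesis
        proof (rule finish[OF G _ zinj Sinj1])
          show "\<forall>i\<in>{1..k}. z (g i) \<in> V \<and> S (g (i+1)) \<in> V" using inV by auto
          show "\<forall>i\<in>{1..k}. \<forall>j\<in>{1..k}. z (g i) \<noteq> S (g (j+1))"
          proof (intro ballI)
            fix i j assume "i \<in> {1..k}" "j \<in> {1..k}"
            thus "z (g i) \<noteq> S (g (j+1))" using dist[of "j+1" i] by auto
          qed
          have "E (z (g i)) (S (g (j+1))) = (i \<le> j)" if "i \<in> {1..k}" "j \<in> {1..k}" for i j
          proof -
            have "E (z (g i)) (S (g (j+1))) = E (S (g (j+1))) (z (g i))"
            proof -
              have "i < k+2" "j+1 < k+2" using that by auto
              thus ?thesis using sym[OF inV(2)[of i] inV(1)[of "j+1"]] by simp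
            qed
            also have "\<dots> = (i \<le> j)"
            proof -
              have "j+1 < k+2" "i < k+1" using that by auto
              from Eval[OF this] show ?thesis using True nd by simp
            qed
            finally show ?thesis .
          qed
          thus "(\<forall>i\<in>{1..k}. \<forall>j\<in>{1..k}. E (z (g i)) (S (g (j+1))) = (i \<le> j)) \<or>
            (\<forall>i\<in>{1..k}. \<forall>j\<in>{1..k}. E (z (g i)) (S (g (j+1))) = (i = j)) \<or>
            (\<forall>i\<in>{1..k}. \<forall>j\<in>{1..k}. E (z (g i)) (S (g (j+1))) = (i \<noteq> j))" by blast
        qed
      next
        case c0F: False
        with False have dd: "d" by simp
        show ?thesis
        proof (rule finish[OF G _ Sinj zinj])
          show "\<forall>i\<in>{1..k}. S (g i) \<in> V \<and> z (g i) \<in> V" using inV by auto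
          show "\<forall>i\<in>{1..k}. \<forall>j\<in>{1..k}. S (g i) \<noteq> z (g j)" using dist by auto
          show "(\<forall>i\<in>{1..k}. \<forall>j\<in>{1..k}. E (S (g i)) (z (g j)) = (i \<le> j)) \<or>
            (\<forall>i\<in>{1..k}. \<forall>j\<in>{1..k}. E (S (g i)) (z (g j)) = (i = j)) \<or>
            (\<forall>i\<in>{1..k}. \<forall>j\<in>{1..k}. E (S (g i)) (z (g j)) = (i \<noteq> j))"
          proof -
            have "\<forall>i\<in>{1..k}. \<forall>j\<in>{1..k}. E (S (g i)) (z (g j)) = (i \<le> j)"
            proof (intro ballI)
              fix i j assume ij: "i \<in> {1..k}" "j \<in> {1..k}"
              show "E (S (g i)) (z (g j)) = (i \<le> j)" using Ev[OF ij] c0F dd by simp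
            qed
            thus ?thesis by blast
          qed
        qed
      qed
    qed
  qed
  thus ?thesis by blast
qed

end
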